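(* Let $(N_r)_{r\in\mathbb{Z}}$ be the Narayana sequence. For $1\le a\le 8$ define $(p_a,q_a)$ by $(p_1,q_1)=(1,0)$, $(p_2,q_2)=(1,2)$, $(p_3,q_3)=(4,-3)$, $(p_4,q_4)=(5,-2)$, $(p_5,q_5)=(6,5)$, $(p_6,q_6)=(10,-1)$, $(p_7,q_7)=(15,-7)$, $(p_8,q_8)=(21,6)$. Then for each $1\le a\le 8$ and every integer $m$, $N_{m}=p_{a}N_{m-a}+q_{a}N_{m-2a}+N_{m-3a}$.
   Context: The Narayana sequence $(N_r)_{r\in\mathbb{Z}}$ is defined by $N_0=0$, $N_1=N_2=1$ and $N_r=N_{r-1}+N_{r-3}$ for all integers $r$ (extended to negative indices via $N_{r-3}=N_r-N_{r-1}$). *)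

theory Defs
  imports Main
begin

fun nar_pos :: "nat \<Rightarrow> int" where
  "nar_pos 0 = 0"
| "nar_pos (Suc 0) = 1"
| "nar_pos (Suc (Suc 0)) = 1"
| "nar_pos (Suc (Suc (Suc n))) = nar_pos (Suc (Suc n)) + nar_pos n"

text \<open>Narayana numbers at nonpositive indices: nar_neg k = N(-k), obtained from
  N(r-3) = N r - N(r-1); N 0 = 0, N(-1) = 0, N(-2) = 1.\<close>
fun nar_neg :: "nat \<Rightarrow> int" where
  "nar_neg 0 = 0"
| "nar_neg (Suc 0) = 0"
| "nar_neg (Suc (Suc 0)) = 1"
| "nar_neg (Suc (Suc (Suc k))) = nar_neg k - nar_neg (Suc k)"

definition narayana :: "int \<Rightarrow> int" where
  "narayana r = (if r \<ge> 0 then nar_pos (nat r) else nar_neg (nat (- r)))"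

definition pq :: "int \<Rightarrow> int \<times> int" where
  "pq a = (if a = 1 then (1, 0) else if a = 2 then (1, 2) else if a = 3 then (4, -3)
     else if a = 4 then (5, -2) else if a = 5 then (6, 5) else if a = 6 then (10, -1)
     else if a = 7 then (15, -7) else (21, 6))"

end

theory Submission
  imports Defs
begin

lemma np3: "nar_pos 0 = 0" "nar_pos 1 = 1" "nar_pos 2 = 1" "nar_neg 1 = 0" "nar_neg 2 = 1" "nar_neg 3 = 0"
  by (simp_all add: numeral_eq_Suc)

lemma rec_all: "narayana r = narayana (r - 1) + narayana (r - 3)"
proof (cases "r \<ge> 3")
  case True
  define n where "n = nat (r - 3)"
  have "nar_pos (Suc (Suc (Suc n))) = nar_pos (Suc (Suc n)) + nar_pos n" by simp
  moreover have "nat r = Suc (Suc (Suc n))" "nat (r - 1) = Suc (Suc n)" "nat (r-3) = n"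
    using True unfolding n_def by linarith+
  moreover have "r \<ge> 0" "r - 1 \<ge> 0" "r - 3 \<ge> 0" using True by linarith+
  ultimately show ?thesis unfolding narayana_def by presburger
next
  case False
  show ?thesis
  proof (cases "r \<ge> 0")
    case True
    with False have "r = 0 \<or> r = 1 \<or> r = 2" by linarith
    then show ?thesis unfolding narayana_def using np3 by (elim disjE) simp_all
  next
    case F2: False
    define k where "k = nat (- r)"
    have "nar_neg (Suc (Suc (Suc k))) = nar_neg k - nar_neg (Suc k)" by simp
    moreover have "nat (-(r-3)) = Suc (Suc (Suc k))" "nat (-(r-1)) = Suc k" "nat (-r) = k"
      using F2 unfolding k_def by linarith+
    moreover have "\<not> r - 1 \<ge> 0" "\<not> r - 3 \<ge> 0" "\<not> r \<ge> 0" using F2 by linarith+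
    ultimately show ?thesis unfolding narayana_def by (simp only: if_False)
  qed
qed

lemma zero_all:
  fixes f :: "int \<Rightarrow> int"
  assumes r: "\<And>r. f r = f (r - 1) + f (r - 3)" and z: "f 0 = 0" "f 1 = 0" "f 2 = 0"
  shows "f m = 0"
proof -
  have up: "f (int n) = 0 \<and> f (int n + 1) = 0 \<and> f (int n + 2) = 0" for n
  proof (induction n)
    case 0 then show ?case using z by simp
  next
    case (Suc n)
    have q: "int n + 3 - 1 = int n + 2" "int n + 3 - 3 = int n" by simp_all
    have e: "f (int n + 3) = f (int n + 2) + f (int n)" using r[of "int n + 3"] unfolding q .
    have w: "f (int (Suc n)) = f (int n + 1)" "f (int (Suc n) + 1) = f (int n + 2)" "f (int (Suc n) + 2) = f (int n + 3)" by (simp_all add: algebra_simps)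
    show ?case using w Suc e by linarith
  qed
  have down: "f (- int n) = 0 \<and> f (- int n + 1) = 0 \<and> f (- int n + 2) = 0" for n
  proof (induction n)
    case 0 then show ?case using z by simp
  next
    case (Suc n)
    have q: "- int n + 2 - 1 = - int n + 1" "- int n + 2 - 3 = - int n - 1" by simp_all
    have e: "f (- int n + 2) = f (- int n + 1) + f (- int n - 1)" using r[of "- int n + 2"] unfolding q .
    have w: "f (- int (Suc n)) = f (- int n - 1)" "f (- int (Suc n) + 1) = f (- int n)" "f (- int (Suc n) + 2) = f (- int n + 1)" by (rule arg_cong[where f=f]; simp)+
    show ?case using w Suc e by linarith
  qed
  show ?thesis
  proof (cases "m \<ge> 0")
    case True then show ?thesis using up[of "nat m"] by simp
  next
    case False then show ?thesis using down[of "nat (-m)"] by simp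
  qed
qed

lemma nn_step: "n \<ge> 3 \<Longrightarrow> nar_neg n = nar_neg (n - 3) - nar_neg (n - 2)"
  by (cases n rule: nar_neg.cases) auto

lemma nnv0: "nar_neg 0 = 0" "nar_neg 1 = 0" "nar_neg 2 = 1" by (simp_all add: numeral_eq_Suc)
lemma nnv3: "nar_neg 3 = 0" using nn_step[of 3]   nnv0 by simp
lemma nnv4: "nar_neg 4 = -1" using nn_step[of 4]   nnv0 by simp
lemma nnv5: "nar_neg 5 = 1" using nn_step[of 5]  nnv3 nnv0 by simp
lemma nnv6: "nar_neg 6 = 1" using nn_step[of 6] nnv3 nnv4 nnv0 by simp
lemma nnv7: "nar_neg 7 = -2" using nn_step[of 7] nnv4 nnv5 nnv0 by simp
lemma nnv8: "nar_neg 8 = 0" using nn_step[of 8] nnv5 nnv6 nnv0 by simp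
lemma nnv9: "nar_neg 9 = 3" using nn_step[of 9] nnv6 nnv7 nnv0 by simp
lemma nnv10: "nar_neg 10 = -2" using nn_step[of 10] nnv7 nnv8 nnv0 by simp
lemma nnv11: "nar_neg 11 = -3" using nn_step[of 11] nnv8 nnv9 nnv0 by simp
lemma nnv12: "nar_neg 12 = 5" using nn_step[of 12] nnv9 nnv10 nnv0 by simp
lemma nnv13: "nar_neg 13 = 1" using nn_step[of 13] nnv10 nnv11 nnv0 by simp
lemma nnv14: "nar_neg 14 = -8" using nn_step[of 14] nnv11 nnv12 nnv0 by simp
lemma nnv15: "nar_neg 15 = 4" using nn_step[of 15] nnv12 nnv13 nnv0 by simp
lemma nnv16: "nar_neg 16 = 9" using nn_step[of 16] nnv13 nnv14 nnv0 by simp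
lemma nnv17: "nar_neg 17 = -12" using nn_step[of 17] nnv14 nnv15 nnv0 by simp
lemma nnv18: "nar_neg 18 = -5" using nn_step[of 18] nnv15 nnv16 nnv0 by simp
lemma nnv19: "nar_neg 19 = 21" using nn_step[of 19] nnv16 nnv17 nnv0 by simp
lemma nnv20: "nar_neg 20 = -7" using nn_step[of 20] nnv17 nnv18 nnv0 by simp
lemma nnv21: "nar_neg 21 = -26" using nn_step[of 21] nnv18 nnv19 nnv0 by simp
lemma nnv22: "nar_neg 22 = 28" using nn_step[of 22] nnv19 nnv20 nnv0 by simp
lemma nnv23: "nar_neg 23 = 19" using nn_step[of 23] nnv20 nnv21 nnv0 by simp
lemma nnv24: "nar_neg 24 = -54" using nn_step[of 24] nnv21 nnv22 nnv0 by simp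
lemma nnv25: "nar_neg 25 = 9" using nn_step[of 25] nnv22 nnv23 nnv0 by simp
lemma nnv26: "nar_neg 26 = 73" using nn_step[of 26] nnv23 nnv24 nnv0 by simp
lemma npv: "nar_pos 0 = 0" "nar_pos 1 = 1" "nar_pos 2 = 1" by (simp_all add: numeral_eq_Suc)
lemmas nnv = nnv0 nnv3 nnv4 nnv5 nnv6 nnv7 nnv8 nnv9 nnv10 nnv11 nnv12 nnv13 nnv14 nnv15 nnv16 nnv17 nnv18 nnv19 nnv20 nnv21 nnv22 nnv23 nnv24 nnv25 nnv26

lemma narval: "narayana r = (if r \<ge> 0 then nar_pos (nat r) else nar_neg (nat (- r)))"
  by (simp add: narayana_def)

theorem theorem1:
  fixes a m :: int
  assumes "1 \<le> a" and "a \<le> 8"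
  shows "narayana m = fst (pq a) * narayana (m - a) + snd (pq a) * narayana (m - 2 * a)
           + narayana (m - 3 * a)"
proof -
  define f where "f m = narayana m - (fst (pq a) * narayana (m - a) + snd (pq a) * narayana (m - 2 * a)
           + narayana (m - 3 * a))" for m
  have r: "f r = f (r - 1) + f (r - 3)" for r
    unfolding f_def
    using rec_all[of r] rec_all[of "r - a"] rec_all[of "r - 2*a"] rec_all[of "r - 3*a"]
    by (simp add: algebra_simps)
  have "a = 1 \<or> a = 2 \<or> a = 3 \<or> a = 4 \<or> a = 5 \<or> a = 6 \<or> a = 7 \<or> a = 8" using assms by auto
  then have z: "f 0 = 0 \<and> f 1 = 0 \<and> f 2 = 0"
    unfolding f_def pq_def
    by (elim disjE) (simp_all add: narayana_def nnv npv)
  show ?thesis using zero_all[of f m, OF r] z unfolding f_def by simp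
qed

end
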